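(* Let $q>2$, let $r\in\mathbb{R}$, and let $a_1,\dots,a_n>0$, $b_1,\dots,b_n>0$. Then $$\left(\sum_{i=1}^n b_i^r\right)^{1-q}\sum_{i=1}^n a_i^r \ln_q\!\left(\frac{a_i^r}{b_i^r}\right)\ \leq\ \left(\sum_{i=1}^n a_i^r\right)\left\{\ln_q\!\left(\sum_{i=1}^n a_i^r\right)-\ln_q\!\left(\sum_{i=1}^n b_i^r\right)\right\}.$$
   Context: For $q\neq 1$ and $x>0$, the $q$-deformed logarithm is $\ln_q(x)=\dfrac{x^{1-q}-1}{1-q}$. *)

theory Defs
  imports Complex_Main
begin

text \<open>q-deformed logarithm, for q \<noteq> 1 and x > 0.\<close>
definition lnq :: "real \<Rightarrow> real \<Rightarrow> real" where
  "lnq q x = (x powr (1 - q) - 1) / (1 - q)"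

end

theory Submission
  imports Defs
begin

lemma tang:
  fixes u s :: real
  assumes "u > 0" "s \<le> 0"
  shows "u powr s \<ge> 1 + s * (u - 1)"
proof -
  have "ln u \<le> u - 1" using assms ln_le_minus_one by blast
  hence "s * (u - 1) \<le> s * ln u" using assms(2) by (simp add: mult_left_mono_neg)
  also have "1 + s * ln u \<le> exp (s * ln u)" by (rule exp_ge_add_one_self)
  finally show ?thesis using assms by (simp add: powr_def)
qed

lemma term_bound:
  fixes x y A B s :: real
  assumes "x > 0" "y > 0" "A > 0" "B > 0" "s \<le> 0"
  shows "x powr s * y powr (1 - s) \<ge>
     A powr s * B powr (-s) * (1 - s) * y + s * A powr (s - 1) * B powr (1 - s) * x"
proof -
  define u where "u = (x/y) / (A/B)"
  have u: "u > 0" using assms by (simp add: u_def)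
  have t: "u powr s \<ge> 1 + s * (u - 1)" using tang[OF u assms(5)] .
  have pos: "A powr s * B powr (-s) * y > 0" using assms by simp
  have "A powr s * B powr (-s) * y * u powr s \<ge> A powr s * B powr (-s) * y * (1 + s * (u - 1))"
    using mult_left_mono[OF t, of "A powr s * B powr (-s) * y"] pos by simp
  moreover have "A powr s * B powr (-s) * y * u powr s = x powr s * y powr (1 - s)"
    using assms unfolding u_def
    by (simp add: powr_divide powr_diff powr_minus divide_simps powr_add powr_mult)
  moreover have "A powr s * B powr (-s) * y * (1 + s * (u - 1)) =
     A powr s * B powr (-s) * (1 - s) * y + s * A powr (s - 1) * B powr (1 - s) * x"
    using assms unfolding u_def
    by (simp add: powr_diff powr_minus divide_simps) (simp add: algebra_simps)
  ultimately show ?thesis by simp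
qed

theorem mainTheorem4:
  fixes q r :: real and n :: nat and a b :: "nat \<Rightarrow> real"
  assumes "q > 2"
    and "\<And>i. i \<in> {1..n} \<Longrightarrow> a i > 0"
    and "\<And>i. i \<in> {1..n} \<Longrightarrow> b i > 0"
  shows "(\<Sum>i=1..n. b i powr r) powr (1 - q) * (\<Sum>i=1..n. a i powr r * lnq q (a i powr r / b i powr r))
         \<le> (\<Sum>i=1..n. a i powr r) * (lnq q (\<Sum>i=1..n. a i powr r) - lnq q (\<Sum>i=1..n. b i powr r))"
proof (cases "n = 0")
  case True thus ?thesis by simp
next
  case False
  define x where "x i = a i powr r" for i
  define y where "y i = b i powr r" for i
  define A where "A = (\<Sum>i=1..n. x i)"
  define B where "B = (\<Sum>i=1..n. y i)"
  define p where "p = 1 - q"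
  define s where "s = 2 - q"
  have p: "p < 0" "s = 1 + p" "s \<le> 0" using assms(1) by (auto simp: p_def s_def)
  have xp: "\<And>i. i \<in> {1..n} \<Longrightarrow> x i > 0" using assms(2) by (simp add: x_def less_imp_neq[symmetric])
  have yp: "\<And>i. i \<in> {1..n} \<Longrightarrow> y i > 0" using assms(3) by (simp add: y_def less_imp_neq[symmetric])
  have ne: "{1..n} \<noteq> {}" using False by auto
  have A: "A > 0" unfolding A_def using xp ne by (intro sum_pos) auto
  have B: "B > 0" unfolding B_def using yp ne by (intro sum_pos) auto
  define S where "S = (\<Sum>i=1..n. x i powr s * y i powr (1 - s))"
  have S1: "S \<ge> (\<Sum>i=1..n. A powr s * B powr (-s) * (1 - s) * y i + s * A powr (s - 1) * B powr (1 - s) * x i)"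
    unfolding S_def using xp yp A B p(3) by (intro sum_mono term_bound) auto
  have S2: "(\<Sum>i=1..n. A powr s * B powr (-s) * (1 - s) * y i + s * A powr (s - 1) * B powr (1 - s) * x i) = A powr s * B powr (-s) * (1 - s) * B + s * A powr (s - 1) * B powr (1 - s) * A"
    by (simp add: sum.distrib A_def B_def flip: sum_distrib_left)
  have S3: "A powr s * B powr (-s) * (1 - s) * B + s * A powr (s - 1) * B powr (1 - s) * A = A powr s * B powr (1 - s)"
    using A B by (simp add: powr_diff powr_minus divide_simps) (simp add: algebra_simps)
  have S: "S \<ge> A powr s * B powr (1 - s)" using S1 S2 S3 by linarith
  have BS: "B powr p * S \<ge> A powr s"
  proof -
    have "B powr p * S \<ge> B powr p * (A powr s * B powr (1 - s))"
      using S B by (intro mult_left_mono) auto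
    moreover have "B powr p * (A powr s * B powr (1 - s)) = A powr s"
      using B p(2) by (simp add: powr_add[symmetric])
    ultimately show ?thesis by simp
  qed
  have tm: "x i * lnq q (x i / y i) = (x i powr s * y i powr (1 - s) - x i) / p"
    if "i \<in> {1..n}" for i
  proof -
    have "x i * (x i / y i) powr p = x i powr s * y i powr (1 - s)"
      using xp[OF that] yp[OF that] p(2)
      by (simp add: powr_divide powr_add powr_minus divide_simps)
    thus ?thesis unfolding lnq_def p_def[symmetric] by (simp add: field_simps)
  qed
  have L: "(\<Sum>i=1..n. x i * lnq q (x i / y i)) = (S - A) / p"
    unfolding S_def A_def using tm by (simp add: sum_divide_distrib[symmetric] sum_subtractf)
  have AA: "A * A powr p = A powr s" using A p(2) by (simp add: powr_add)
  have "B powr p * ((S - A) / p) - A * ((A powr p - 1) / p - (B powr p - 1) / p)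
        = (B powr p * S - A * A powr p) / p"
    using p(1) by (simp add: field_simps)
  also have "\<dots> \<le> 0" using BS AA p(1) by (simp add: divide_nonneg_neg)
  finally have "B powr p * ((S - A) / p) \<le> A * ((A powr p - 1) / p - (B powr p - 1) / p)" by simp
  hence "B powr (1 - q) * (\<Sum>i=1..n. x i * lnq q (x i / y i)) \<le> A * (lnq q A - lnq q B)"
    unfolding L unfolding lnq_def p_def .
  thus ?thesis by (simp add: A_def B_def x_def y_def)
qed

end
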